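(* Let $k\ge 0$ and $n\ge 2k+2$ be integers and let $t_1<t_2<\dots<t_{n+1}$ be real numbers. Then there is $\lambda_0\in\mathbb R$ such that for every $\lambda\ge\lambda_0$ the polytope \[ P:=\mathrm{conv}\Big(\{(t_i,t_i^2,\dots,t_i^{2k+2})^T : i\in[n+1]\}\ \cup\ \{(t_i,t_i^2,\dots,t_i^{2k+1},\lambda-t_i^{2k+2})^T : i\in[n+1]\}\Big)\subset\mathbb R^{2k+2} \] is a $(k,(1,n))$-PSN polytope of dimension $2k+2$, i.e. its $k$-skeleton is combinatorially equivalent to that of $\Delta_1\times\Delta_n$.
   Context: $\Delta_m$ denotes the $m$-dimensional simplex. For $\mathbf n=(n_1,\dots,n_r)$ with $r\ge1$ and all $n_i\ge1$, $\Delta_{\mathbf n}:=\Delta_{n_1}\times\dots\times\Delta_{n_r}$. The $k$-skeleton of a polytope is the poset of its faces of dimension at most $k$; two $k$-skeleta are combinatorially equivalent if these posets are isomorphic. For $k\ge0$, a convex polytope is $(k,\mathbf n)$-PSN if its $k$-skeleton is combinatorially equivalent to that of $\Delta_{\mathbf n}$. *)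

theory Defs
  imports "HOL-Analysis.Analysis"
begin

definition std_simplex :: "(real^'m) set" where
  "std_simplex = {x. (\<forall>i. 0 \<le> x $ i) \<and> (\<Sum>i\<in>UNIV. x $ i) = 1}"

definition skeleton :: "int \<Rightarrow> 'a::euclidean_space set \<Rightarrow> 'a set set" where
  "skeleton k P = {F. F face_of P \<and> aff_dim F \<le> k}"

definition skel_equiv :: "int \<Rightarrow> 'a::euclidean_space set \<Rightarrow> 'b::euclidean_space set \<Rightarrow> bool" where
  "skel_equiv k P Q \<longleftrightarrow>
     (\<exists>f. bij_betw f (skeleton k P) (skeleton k Q) \<and>
          (\<forall>F\<in>skeleton k P. \<forall>G\<in>skeleton k P. F \<subseteq> G \<longleftrightarrow> f F \<subseteq> f G))"

text \<open>A vector in real^'d given by coordinates indexed 1..D, via a coordinate labelling e.\<close>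
definition coords :: "(nat \<Rightarrow> 'd::finite) \<Rightarrow> nat \<Rightarrow> (nat \<Rightarrow> real) \<Rightarrow> real^'d" where
  "coords e D f = (\<chi> j. f (inv_into {1..D} e j))"

end

theory Submission
  imports Defs "HOL-Computational_Algebra.Polynomial"
begin


lemma face_hyp_conv:
  fixes v :: "'i \<Rightarrow> 'a::euclidean_space"
  assumes fin: "finite I" and le: "\<forall>x\<in>I. a \<bullet> v x \<le> b"
  shows "convex hull (v`I) \<inter> {y. a \<bullet> y = b} = convex hull (v ` {x\<in>I. a \<bullet> v x = b})"
    and "(convex hull (v`I) \<inter> {y. a \<bullet> y = b}) face_of convex hull (v`I)"
proof -
  have sub: "convex hull (v`I) \<subseteq> {y. a \<bullet> y \<le> b}"
    by (rule hull_minimal) (use le convex_halfspace_le in auto)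
  show F: "(convex hull (v`I) \<inter> {y. a \<bullet> y = b}) face_of convex hull (v`I)"
    by (rule face_of_Int_supporting_hyperplane_le) (use sub in auto)
  show "convex hull (v`I) \<inter> {y. a \<bullet> y = b} = convex hull (v ` {x\<in>I. a \<bullet> v x = b})"
  proof
    have "compact (v`I)" using fin by (simp add: finite_imp_compact)
    then obtain S' where S': "S' \<subseteq> v`I" "convex hull (v`I) \<inter> {y. a \<bullet> y = b} = convex hull S'"
      using face_of_convex_hull_subset[OF _ F] by blast
    have "S' \<subseteq> convex hull (v`I) \<inter> {y. a \<bullet> y = b}"
      unfolding S'(2) by (rule hull_subset)
    then have sub2: "S' \<subseteq> v ` {x\<in>I. a \<bullet> v x = b}" using S'(1) by fastforce
    show "convex hull (v`I) \<inter> {y. a \<bullet> y = b} \<subseteq> convex hull (v ` {x\<in>I. a \<bullet> v x = b})"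
      unfolding S'(2) by (rule hull_mono[OF sub2])
  next
    have "convex hull (v ` {x\<in>I. a \<bullet> v x = b}) \<subseteq> {y. a \<bullet> y = b}"
      by (rule hull_minimal) (auto simp: convex_hyperplane)
    moreover have "convex hull (v ` {x\<in>I. a \<bullet> v x = b}) \<subseteq> convex hull (v`I)"
      by (rule hull_mono) auto
    ultimately show "convex hull (v ` {x\<in>I. a \<bullet> v x = b}) \<subseteq> convex hull (v`I) \<inter> {y. a \<bullet> y = b}"
      by auto
  qed
qed

lemma skeleton_char:
  fixes v :: "'i \<Rightarrow> 'a::euclidean_space"
  assumes fin: "finite I" and Q: "Q = convex hull (v`I)"
  and R: "\<And>S. S\<in>\<Phi> \<Longrightarrow> \<exists>a b. (\<forall>x\<in>I. a \<bullet> v x \<le> b) \<and> S = {x\<in>I. a \<bullet> v x = b}"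
  and C: "\<And>a b. \<forall>x\<in>I. a \<bullet> v x \<le> b \<Longrightarrow> aff_dim (v ` {x\<in>I. a \<bullet> v x = b}) \<le> k
           \<Longrightarrow> {x\<in>I. a \<bullet> v x = b} \<in> \<Phi>"
  and U: "\<And>S. S\<in>\<Phi> \<Longrightarrow> aff_dim (v`S) \<le> k"
  shows "skeleton k Q = (\<lambda>S. convex hull (v`S)) ` \<Phi>"
    and "\<forall>S\<in>\<Phi>. \<forall>S'\<in>\<Phi>. convex hull (v`S) \<subseteq> convex hull (v`S') \<longleftrightarrow> S \<subseteq> S'"
proof -
  show "skeleton k Q = (\<lambda>S. convex hull (v`S)) ` \<Phi>"
  proof
    show "skeleton k Q \<subseteq> (\<lambda>S. convex hull (v`S)) ` \<Phi>"
    proof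
      fix F assume "F \<in> skeleton k Q"
      then have F: "F face_of Q" "aff_dim F \<le> k" by (auto simp: skeleton_def)
      have "polyhedron Q" using Q fin by (simp add: polytope_convex_hull polytope_imp_polyhedron)
      then have "F exposed_face_of Q" using F exposed_face_of_polyhedron by blast
      then obtain a b where ab: "Q \<subseteq> {x. a \<bullet> x \<le> b}" "F = Q \<inter> {x. a \<bullet> x = b}"
        by (auto simp: exposed_face_of_def)
      have "v`I \<subseteq> Q" unfolding Q by (rule hull_subset)
      then have le: "\<forall>x\<in>I. a \<bullet> v x \<le> b" using ab(1) by auto
      have Fe: "F = convex hull (v ` {x\<in>I. a \<bullet> v x = b})"
        using face_hyp_conv(1)[OF fin le] ab(2) Q by simp
      then have "aff_dim (v ` {x\<in>I. a \<bullet> v x = b}) \<le> k" using F(2) by (simp add: aff_dim_convex_hull)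
      then have "{x\<in>I. a \<bullet> v x = b} \<in> \<Phi>" using C le by blast
      then show "F \<in> (\<lambda>S. convex hull (v`S)) ` \<Phi>" using Fe by blast
    qed
  next
    show "(\<lambda>S. convex hull (v`S)) ` \<Phi> \<subseteq> skeleton k Q"
    proof
      fix F assume "F \<in> (\<lambda>S. convex hull (v`S)) ` \<Phi>"
      then obtain S where S: "S \<in> \<Phi>" "F = convex hull (v`S)" by blast
      obtain a b where ab: "\<forall>x\<in>I. a \<bullet> v x \<le> b" "S = {x\<in>I. a \<bullet> v x = b}" using R[OF S(1)] by blast
      have "F face_of Q" using face_hyp_conv[OF fin ab(1)] ab(2) S(2) Q by simp
      moreover have "aff_dim F \<le> k" using U[OF S(1)] S(2) by (simp add: aff_dim_convex_hull)
      ultimately show "F \<in> skeleton k Q" by (simp add: skeleton_def)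
    qed
  qed
  show "\<forall>S\<in>\<Phi>. \<forall>S'\<in>\<Phi>. convex hull (v`S) \<subseteq> convex hull (v`S') \<longleftrightarrow> S \<subseteq> S'"
  proof (intro ballI iffI)
    fix S S' :: "'i set" assume S: "S \<in> \<Phi>" and S': "S' \<in> \<Phi>" and sub: "convex hull (v`S) \<subseteq> convex hull (v`S')"
    obtain a b where ab: "\<forall>x\<in>I. a \<bullet> v x \<le> b" "S' = {x\<in>I. a \<bullet> v x = b}" using R[OF S'] by blast
    obtain a' b' where ab': "S = {x\<in>I. a' \<bullet> v x = b'}" using R[OF S] by blast
    have h: "convex hull (v`S') \<subseteq> {y. a \<bullet> y = b}"
      by (rule hull_minimal) (use ab(2) convex_hyperplane in auto)
    show "S \<subseteq> S'"
    proof
      fix x assume "x \<in> S"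
      then have "v x \<in> convex hull (v`S)" by (simp add: hull_inc)
      then have "v x \<in> convex hull (v`S')" using sub by blast
      then have "a \<bullet> v x = b" using h by auto
      then show "x \<in> S'" using ab ab' \<open>x\<in>S\<close> by auto
    qed
  next
    fix S S' :: "'i set" assume "S \<subseteq> S'"
    then show "convex hull (v`S) \<subseteq> convex hull (v`S')" by (simp add: hull_mono image_mono)
  qed
qed

lemma skel_equiv_from_char:
  assumes P1: "skeleton k P = (\<lambda>S. convex hull (v`S)) ` \<Phi>"
    and P2: "\<forall>S\<in>\<Phi>. \<forall>S'\<in>\<Phi>. convex hull (v`S) \<subseteq> convex hull (v`S') \<longleftrightarrow> S \<subseteq> S'"
    and Q1: "skeleton k Q = (\<lambda>S. convex hull (w`S)) ` \<Phi>"
    and Q2: "\<forall>S\<in>\<Phi>. \<forall>S'\<in>\<Phi>. convex hull (w`S) \<subseteq> convex hull (w`S') \<longleftrightarrow> S \<subseteq> S'"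
  shows "skel_equiv k P Q"
proof -
  define g where "g = (\<lambda>S. convex hull (v`S))"
  define h where "h = (\<lambda>S. convex hull (w`S))"
  have g2: "g S \<subseteq> g S' \<longleftrightarrow> S \<subseteq> S'" if "S \<in> \<Phi>" "S' \<in> \<Phi>" for S S'
    unfolding g_def by (rule bspec[OF bspec[OF P2 that(1)] that(2)])
  have h2: "h S \<subseteq> h S' \<longleftrightarrow> S \<subseteq> S'" if "S \<in> \<Phi>" "S' \<in> \<Phi>" for S S'
    unfolding h_def by (rule bspec[OF bspec[OF Q2 that(1)] that(2)])
  have ig: "inj_on g \<Phi>"
  proof (rule inj_onI)
    fix S S' assume a: "S \<in> \<Phi>" "S' \<in> \<Phi>" "g S = g S'"
    then have "S \<subseteq> S'" "S' \<subseteq> S" using g2[OF a(1,2)] g2[OF a(2,1)] by simp_all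
    then show "S = S'" by (rule subset_antisym)
  qed
  have ih: "inj_on h \<Phi>"
  proof (rule inj_onI)
    fix S S' assume a: "S \<in> \<Phi>" "S' \<in> \<Phi>" "h S = h S'"
    then have "S \<subseteq> S'" "S' \<subseteq> S" using h2[OF a(1,2)] h2[OF a(2,1)] by simp_all
    then show "S = S'" by (rule subset_antisym)
  qed
  have P1': "skeleton k P = g ` \<Phi>" using P1 by (simp add: g_def)
  have Q1': "skeleton k Q = h ` \<Phi>" using Q1 by (simp add: h_def)
  have bg: "bij_betw g \<Phi> (skeleton k P)" using ig P1' by (simp add: bij_betw_def)
  have bh: "bij_betw h \<Phi> (skeleton k Q)" using ih Q1' by (simp add: bij_betw_def)
  define f where "f = h \<circ> inv_into \<Phi> g"
  have bf: "bij_betw f (skeleton k P) (skeleton k Q)"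
    unfolding f_def by (rule bij_betw_trans[OF bij_betw_inv_into[OF bg] bh])
  have fg: "f (g S) = h S" if "S \<in> \<Phi>" for S
    unfolding f_def using inv_into_f_f[OF ig that] by simp
  have ord: "F \<subseteq> G \<longleftrightarrow> f F \<subseteq> f G" if "F \<in> skeleton k P" "G \<in> skeleton k P" for F G
  proof -
    have "F \<in> g ` \<Phi>" "G \<in> g ` \<Phi>" using that P1' by simp_all
    then obtain S S' where S: "S \<in> \<Phi>" "F = g S" and S': "S' \<in> \<Phi>" "G = g S'" by (auto simp only: image_iff)
    show ?thesis using g2[OF S(1) S'(1)] h2[OF S(1) S'(1)] fg[OF S(1)] fg[OF S'(1)] S(2) S'(2) by simp
  qed
  show ?thesis unfolding skel_equiv_def
  proof (intro exI[of _ f] conjI ballI)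
    show "bij_betw f (skeleton k P) (skeleton k Q)" by (rule bf)
    fix F G assume "F \<in> skeleton k P" "G \<in> skeleton k P"
    then show "F \<subseteq> G \<longleftrightarrow> f F \<subseteq> f G" by (rule ord)
  qed
qed

lemma not_in_affine_hull_sep:
  assumes "\<forall>y\<in>S. a \<bullet> y = b" "a \<bullet> z \<noteq> b"
  shows "z \<notin> affine hull S"
proof -
  have "affine hull S \<subseteq> {y. a \<bullet> y = b}"
    by (rule hull_minimal) (use assms affine_hyperplane in auto)
  then show ?thesis using assms(2) by auto
qed

lemma aff_dim_insert_sep:
  fixes S :: "'a::euclidean_space set"
  assumes "\<forall>y\<in>S. a \<bullet> y = b" "a \<bullet> z \<noteq> b"
  shows "aff_dim (insert z S) = aff_dim S + 1"
  using not_in_affine_hull_sep[OF assms] by (simp add: aff_dim_insert)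

lemma indep_induct:
  fixes f :: "'i \<Rightarrow> 'a::euclidean_space"
  assumes "finite U"
    and "\<And>U' j. U' \<subseteq> U \<Longrightarrow> j \<in> U - U' \<Longrightarrow> \<exists>a b. (\<forall>i\<in>U'. a \<bullet> f i = b) \<and> a \<bullet> f j \<noteq> b"
  shows "aff_dim (f`U) = int (card U) - 1"
  using assms
proof (induction U rule: finite_induct)
  case empty
  then show ?case by simp
next
  case (insert x F)
  have IH: "aff_dim (f`F) = int (card F) - 1"
  proof (rule insert.IH)
    fix U' j assume "U' \<subseteq> F" "j \<in> F - U'"
    then have "U' \<subseteq> insert x F" "j \<in> insert x F - U'" by auto
    then show "\<exists>a b. (\<forall>i\<in>U'. a \<bullet> f i = b) \<and> a \<bullet> f j \<noteq> b" by (rule insert.prems)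
  qed
  obtain a b where ab: "\<forall>i\<in>F. a \<bullet> f i = b" "a \<bullet> f x \<noteq> b"
    using insert.prems[of F x] insert.hyps(2) by auto
  have "aff_dim (f ` insert x F) = aff_dim (f`F) + 1"
    using aff_dim_insert_sep[of "f`F" a b "f x"] ab by simp
  then show ?case using IH insert.hyps by simp
qed

lemma prism_ub:
  fixes p q :: "'i \<Rightarrow> 'a::euclidean_space"
  assumes fin: "finite T" and i0: "i0 \<in> T"
    and th: "\<And>i. i \<in> T \<Longrightarrow> q i - p i = \<theta> i *\<^sub>R (q i0 - p i0)"
  shows "aff_dim (p`T \<union> q`T) \<le> int (card T)"
proof -
  define W where "W = insert (q i0) (p`T)"
  have hW: "p`T \<union> q`T \<subseteq> affine hull W"
  proof
    fix y assume "y \<in> p`T \<union> q`T"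
    then consider i where "i \<in> T" "y = p i" | i where "i \<in> T" "y = q i" by blast
    then show "y \<in> affine hull W"
    proof cases
      case 1 then show ?thesis by (simp add: W_def hull_inc)
    next
      case 2
      have "p i + \<theta> i *\<^sub>R (q i0 - p i0) \<in> affine hull W"
        by (rule mem_affine_3_minus) (use 2 i0 in \<open>auto simp: W_def hull_inc\<close>)
      moreover have "y = p i + \<theta> i *\<^sub>R (q i0 - p i0)" using 2 th[of i] by (simp add: algebra_simps)
      ultimately show ?thesis by simp
    qed
  qed
  have "aff_dim (p`T \<union> q`T) \<le> aff_dim W"
    using aff_dim_subset[OF hW] by simp
  also have "\<dots> \<le> int (card W) - 1" by (rule aff_dim_le_card) (simp add: W_def fin)
  also have "card W \<le> card T + 1"
  proof -
    have "card W \<le> Suc (card (p`T))" unfolding W_def using fin by (simp add: card_insert_le_m1 card_insert_if)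
    also have "card (p`T) \<le> card T" using fin by (rule card_image_le)
    finally show ?thesis by simp
  qed
  then have "int (card W) - 1 \<le> int (card T)" by simp
  finally show ?thesis .
qed

definition Phi :: "nat \<Rightarrow> nat \<Rightarrow> (bool \<times> nat) set set" where
  "Phi k n = insert {} {A \<times> T | A T. A \<noteq> {} \<and> T \<subseteq> {1..n+1} \<and> T \<noteq> {} \<and> card A + card T \<le> k + 2}"

lemma bool_set_cases:
  fixes A :: "bool set"
  assumes "A \<noteq> {}"
  obtains "A = UNIV" | \<alpha> where "A = {\<alpha>}"
proof -
  have "A = UNIV \<or> A = {True} \<or> A = {False}"
  proof (cases "True \<in> A"; cases "False \<in> A")
    assume "True \<in> A" "False \<in> A" then show ?thesis using UNIV_bool by blast
  next
    assume "True \<in> A" "False \<notin> A" then have "A = {True}" unfolding set_eq_iff by (metis (full_types) singleton_iff empty_iff)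
    then show ?thesis by blast
  next
    assume "True \<notin> A" "False \<in> A" then have "A = {False}" unfolding set_eq_iff by (metis (full_types) singleton_iff empty_iff)
    then show ?thesis by blast
  next
    assume "True \<notin> A" "False \<notin> A" then have "A = {}" unfolding set_eq_iff by (metis (full_types) singleton_iff empty_iff)
    then show ?thesis using assms by blast
  qed
  then show ?thesis using that by blast
qed

lemma C_generic:
  fixes v :: "bool \<times> nat \<Rightarrow> 'a::euclidean_space"
  assumes LB1: "\<And>\<alpha> U. U \<subseteq> {1..n+1} \<Longrightarrow> card U = k+2 \<Longrightarrow> aff_dim (v ` ({\<alpha>}\<times>U)) = int k + 1"
    and LB2: "\<And>U i0. U \<subseteq> {1..n+1} \<Longrightarrow> card U = k+1 \<Longrightarrow> i0 \<in> U \<Longrightarrow>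
               aff_dim (insert (v (True,i0)) (v ` ({False}\<times>U))) = int k + 1"
    and A: "A \<noteq> {}" and T: "T \<subseteq> {1..n+1}" and dim: "aff_dim (v`(A\<times>T)) \<le> int k"
  shows "A \<times> T \<in> Phi k n"
proof (cases "T = {}")
  case True then show ?thesis by (simp add: Phi_def)
next
  case Tne: False
  have finT: "finite T" using T finite_subset by blast
  have card_ok: "card A + card T \<le> k + 2"
    using A
  proof (cases rule: bool_set_cases)
    case 1
    have "card T \<le> k"
    proof (rule ccontr)
      assume "\<not> card T \<le> k"
      then have "k+1 \<le> card T" by simp
      then obtain U where U: "U \<subseteq> T" "card U = k+1" "finite U"
        using obtain_subset_with_card_n[of "k+1" T] by blast
      have "U \<noteq> {}" using U(2) by auto
      then obtain i0 where i0: "i0 \<in> U" by blast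
      have UT: "U \<subseteq> {1..n+1}" using U(1) T by (rule subset_trans)
      have "insert (v (True,i0)) (v ` ({False}\<times>U)) \<subseteq> v`(A\<times>T)" using U(1) i0 1 by auto
      then have "aff_dim (insert (v (True,i0)) (v ` ({False}\<times>U))) \<le> aff_dim (v`(A\<times>T))" by (rule aff_dim_subset)
      moreover have "aff_dim (insert (v (True,i0)) (v ` ({False}\<times>U))) = int k + 1"
        by (rule LB2[OF UT U(2) i0])
      ultimately show False using dim by linarith
    qed
    then show ?thesis using 1 by simp
  next
    case (2 \<alpha>)
    have "card T \<le> k+1"
    proof (rule ccontr)
      assume "\<not> card T \<le> k+1"
      then have "k+2 \<le> card T" by simp
      then obtain U where U: "U \<subseteq> T" "card U = k+2" "finite U"
        using obtain_subset_with_card_n[of "k+2" T] by blast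
      have UT: "U \<subseteq> {1..n+1}" using U(1) T by (rule subset_trans)
      have "v ` ({\<alpha>}\<times>U) \<subseteq> v`(A\<times>T)" using U(1) 2 by auto
      then have "aff_dim (v ` ({\<alpha>}\<times>U)) \<le> aff_dim (v`(A\<times>T))" by (rule aff_dim_subset)
      moreover have "aff_dim (v ` ({\<alpha>}\<times>U)) = int k + 1" by (rule LB1[OF UT U(2)])
      ultimately show False using dim by linarith
    qed
    then show ?thesis using 2 by simp
  qed
  show ?thesis unfolding Phi_def using A T Tne card_ok by blast
qed

lemma U_generic:
  fixes v :: "bool \<times> nat \<Rightarrow> 'a::euclidean_space"
  assumes UB2: "\<And>T. T \<subseteq> {1..n+1} \<Longrightarrow> T \<noteq> {} \<Longrightarrow> aff_dim (v`(UNIV\<times>T)) \<le> int (card T)"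
    and S: "S \<in> Phi k n"
  shows "aff_dim (v`S) \<le> int k"
proof -
  consider "S = {}" | A T where "S = A \<times> T" "A \<noteq> {}" "T \<subseteq> {1..n+1}" "T \<noteq> {}" "card A + card T \<le> k+2"
    using S unfolding Phi_def by blast
  then show ?thesis
  proof cases
    case 1 then show ?thesis by simp
  next
    case 2
    note S2 = 2
    have finT: "finite T" using S2(3) finite_subset by blast
    from \<open>A \<noteq> {}\<close> show ?thesis
    proof (cases rule: bool_set_cases)
      case 1
      then have "card T \<le> k" using S2(5) by simp
      then show ?thesis using UB2[OF S2(3) S2(4)] S2(1) 1 by simp
    next
      case (2 \<alpha>)
      have fin: "finite S" using finT S2(1) 2 by simp
      have "aff_dim (v`S) \<le> int (card (v`S)) - 1"
        by (rule aff_dim_le_card) (simp add: fin)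
      also have "card (v`S) \<le> card S" using fin by (rule card_image_le)
      also have "card S = card T" using S2(1) 2 by (simp add: card_cartesian_product)
      finally show ?thesis using S2(5) 2 by simp
    qed
  qed
qed




definition LP :: "(nat \<Rightarrow> real) \<Rightarrow> nat set \<Rightarrow> real poly" where
  "LP t U = (\<Prod>r\<in>U. [:- t r, 1:])"

lemma LP_props:
  assumes "finite U"
  shows "degree (LP t U) = card U \<and> lead_coeff (LP t U) = 1"
  using assms
proof (induction U rule: finite_induct)
  case empty then show ?case by (simp add: LP_def)
next
  case (insert x F)
  have eq: "LP t (insert x F) = [:- t x, 1:] * LP t F" using insert.hyps by (simp add: LP_def)
  have nz: "LP t F \<noteq> 0" using insert.IH by auto
  have "degree (LP t (insert x F)) = 1 + card F"
    unfolding eq by (subst degree_mult_eq) (use nz insert.IH in auto)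
  moreover have "lead_coeff (LP t (insert x F)) = 1"
  proof -
    have h2: "lead_coeff (LP t F) = 1" by (rule conjunct2[OF insert.IH])
    show ?thesis unfolding eq lead_coeff_mult h2 by simp
  qed
  ultimately show ?case using insert.hyps by simp
qed

lemma poly_LP: "finite U \<Longrightarrow> poly (LP t U) x = (\<Prod>r\<in>U. x - t r)"
  by (simp add: LP_def poly_prod)

lemma poly_LP_zero: "finite U \<Longrightarrow> poly (LP t U) x = 0 \<longleftrightarrow> (\<exists>r\<in>U. x = t r)"
  by (simp add: poly_LP)

definition phi :: "nat \<Rightarrow> (nat \<Rightarrow> real) \<Rightarrow> real \<Rightarrow> real" where
  "phi D c x = (\<Sum>j=1..D. c j * x ^ j)"

lemma phi_poly:
  assumes "degree p \<le> D"
  shows "phi D (\<lambda>j. coeff p j) x = poly p x - coeff p 0"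
proof -
  have "poly p x = (\<Sum>i\<le>D. coeff p i * x ^ i)"
    unfolding poly_altdef by (rule sum.mono_neutral_left) (use assms in \<open>auto simp: coeff_eq_0\<close>)
  also have "{..D} = insert 0 {1..D}" by auto
  also have "(\<Sum>i\<in>insert 0 {1..D}. coeff p i * x ^ i) = coeff p 0 + phi D (\<lambda>j. coeff p j) x"
    by (simp add: phi_def)
  finally show ?thesis by simp
qed

lemma phi_neg_poly:
  assumes "degree p \<le> D"
  shows "phi D (\<lambda>j. - coeff p j) x = coeff p 0 - poly p x"
proof -
  have "phi D (\<lambda>j. - coeff p j) x = - phi D (\<lambda>j. coeff p j) x"
    by (simp add: phi_def sum_negf)
  then show ?thesis using phi_poly[OF assms, of x] by simp
qed

locale Pside =
  fixes k n D :: nat and t :: "nat \<Rightarrow> real" and e :: "nat \<Rightarrow> 'd::finite" and lam :: real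
  assumes D: "D = 2*k+2" and nk: "n \<ge> D"
    and mono: "\<And>i j. 1 \<le> i \<Longrightarrow> i < j \<Longrightarrow> j \<le> n+1 \<Longrightarrow> t i < t j"
    and bij: "bij_betw e {1..D} (UNIV :: 'd set)"
    and lam: "\<And>m. m \<in> {1..n+1} \<Longrightarrow> 2 * t m ^ D < lam"
begin

definition va :: "nat \<Rightarrow> real^'d" where "va m = coords e D (\<lambda>j. t m ^ j)"
definition vb :: "nat \<Rightarrow> real^'d" where
  "vb m = coords e D (\<lambda>j. if j = D then lam - t m ^ D else t m ^ j)"
definition v :: "bool \<times> nat \<Rightarrow> real^'d" where "v x = (if fst x then vb (snd x) else va (snd x))"

definition mu :: "nat \<Rightarrow> real" where "mu m = lam - 2 * t m ^ D"

lemma mu_pos: "m \<in> {1..n+1} \<Longrightarrow> mu m > 0"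
  using lam[of m] by (simp add: mu_def)

lemma coords_nth: assumes "j \<in> {1..D}" shows "coords e D f $ e j = f j"
  unfolding coords_def vec_lambda_beta bij_betw_inv_into_left[OF bij assms] ..

lemma coords_all: "a = coords e D (\<lambda>j. a $ e j)"
  unfolding vec_eq_iff coords_def vec_lambda_beta bij_betw_inv_into_right[OF bij UNIV_I] by simp

lemma inner_coords: "coords e D c \<bullet> coords e D f = (\<Sum>j=1..D. c j * f j)"
proof -
  have "coords e D c \<bullet> coords e D f
      = (\<Sum>i\<in>UNIV. coords e D c $ i * coords e D f $ i)"
    by (simp add: inner_vec_def)
  also have "\<dots> = (\<Sum>j\<in>{1..D}. coords e D c $ e j * coords e D f $ e j)"
    by (rule sum.reindex_bij_betw[OF bij, symmetric])
  also have "\<dots> = (\<Sum>j=1..D. c j * f j)"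
    by (rule sum.cong) (simp_all add: coords_nth)
  finally show ?thesis .
qed

lemma inner_va: "coords e D c \<bullet> va m = phi D c (t m)"
  by (simp add: va_def inner_coords phi_def)

lemma inner_vb: "coords e D c \<bullet> vb m = phi D c (t m) + c D * mu m"
proof -
  have "coords e D c \<bullet> vb m
     = (\<Sum>j=1..D. c j * (if j = D then lam - t m ^ D else t m ^ j))"
    by (simp add: vb_def inner_coords)
  also have "\<dots> = (\<Sum>j=1..D. c j * t m ^ j + (if j = D then c D * mu m else 0))"
    by (rule sum.cong) (auto simp: mu_def algebra_simps)
  also have "\<dots> = phi D c (t m) + c D * mu m"
    using D by (simp add: sum.distrib phi_def)
  finally show ?thesis .
qed

lemma t_inj: "inj_on t {1..n+1}"
proof (rule inj_onI)
  fix i j assume ij: "i \<in> {1..n+1}" "j \<in> {1..n+1}" "t i = t j"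
  show "i = j"
  proof (rule ccontr)
    assume "i \<noteq> j"
    then have "i < j \<or> j < i" by auto
    then show False using mono[of i j] mono[of j i] ij by auto
  qed
qed

lemma t_ge: "m \<in> {1..n+1} \<Longrightarrow> t 1 \<le> t m"
  using mono[of 1 m] by (cases "m = 1") auto

lemma sep_LP:
  assumes "finite U'" "U' \<subseteq> {1..n+1}" "m \<in> {1..n+1}"
  shows "poly (LP t U') (t m) = 0 \<longleftrightarrow> m \<in> U'"
proof -
  have "poly (LP t U') (t m) = 0 \<longleftrightarrow> (\<exists>r\<in>U'. t m = t r)" by (rule poly_LP_zero[OF assms(1)])
  also have "\<dots> \<longleftrightarrow> m \<in> U'"
    using inj_onD[OF t_inj] assms(2,3) by blast
  finally show ?thesis .
qed

lemma LB_gen: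
  fixes f :: "nat \<Rightarrow> real^'d"
  assumes U: "U \<subseteq> {1..n+1}" and cardU: "card U \<le> B"
    and val: "\<And>U' m. finite U' \<Longrightarrow> card U' < B \<Longrightarrow> m \<in> {1..n+1} \<Longrightarrow>
        coords e D (\<lambda>i. coeff (LP t U') i) \<bullet> f m = poly (LP t U') (t m) - coeff (LP t U') 0"
  shows "aff_dim (f ` U) = int (card U) - 1"
proof (rule indep_induct)
  show finU: "finite U" using U finite_subset by blast
  fix U' j assume U': "U' \<subseteq> U" "j \<in> U - U'"
  have finU': "finite U'" using U'(1) finU finite_subset by blast
  have "U' \<subset> U" using U' by blast
  then have "card U' < card U" by (rule psubset_card_mono[OF finU])
  then have cU': "card U' < B" using cardU by simp
  have U'n: "U' \<subseteq> {1..n+1}" using U'(1) U by (rule subset_trans)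
  let ?a = "coords e D (\<lambda>i. coeff (LP t U') i)"
  let ?b = "- coeff (LP t U') 0"
  have "\<forall>i\<in>U'. ?a \<bullet> f i = ?b"
  proof
    fix i assume i: "i \<in> U'"
    then have i1: "i \<in> {1..n+1}" using U'n by blast
    have "poly (LP t U') (t i) = 0" using sep_LP[OF finU' U'n i1] i by simp
    then show "?a \<bullet> f i = ?b" using val[OF finU' cU' i1] by simp
  qed
  moreover have "?a \<bullet> f j \<noteq> ?b"
  proof -
    have j1: "j \<in> {1..n+1}" using U'(2) U by blast
    have j2: "j \<notin> U'" using U'(2) by blast
    have "poly (LP t U') (t j) \<noteq> 0" using sep_LP[OF finU' U'n j1] j2 by simp
    then show ?thesis using val[OF finU' cU' j1] by simp
  qed
  ultimately show "\<exists>a b. (\<forall>i\<in>U'. a \<bullet> f i = b) \<and> a \<bullet> f j \<noteq> b"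
    by (intro exI[of _ ?a] exI[of _ ?b] conjI)
qed

lemma LB_a:
  assumes U: "U \<subseteq> {1..n+1}" and cU: "card U \<le> D+1"
  shows "aff_dim (va ` U) = int (card U) - 1"
proof (rule LB_gen[OF U cU])
  fix U' :: "nat set" and m :: nat assume a: "finite U'" "card U' < D+1"
  have "degree (LP t U') = card U'" by (rule conjunct1[OF LP_props[OF a(1), of t]])
  then have dg: "degree (LP t U') \<le> D" using a(2) by linarith
  have "coords e D (\<lambda>i. coeff (LP t U') i) \<bullet> va m = phi D (\<lambda>i. coeff (LP t U') i) (t m)"
    by (rule inner_va)
  also have "\<dots> = poly (LP t U') (t m) - coeff (LP t U') 0" by (rule phi_poly[OF dg])
  finally show "coords e D (\<lambda>i. coeff (LP t U') i) \<bullet> va m = poly (LP t U') (t m) - coeff (LP t U') 0" .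
qed

lemma LB_b:
  assumes U: "U \<subseteq> {1..n+1}" and cU: "card U \<le> D"
  shows "aff_dim (vb ` U) = int (card U) - 1"
proof (rule LB_gen[OF U cU])
  fix U' :: "nat set" and m :: nat assume a: "finite U'" "card U' < D"
  have "degree (LP t U') = card U'" by (rule conjunct1[OF LP_props[OF a(1), of t]])
  then have dg: "degree (LP t U') < D" using a(2) by linarith
  then have c0: "coeff (LP t U') D = 0" by (rule coeff_eq_0)
  have "coords e D (\<lambda>i. coeff (LP t U') i) \<bullet> vb m = phi D (\<lambda>i. coeff (LP t U') i) (t m) + coeff (LP t U') D * mu m"
    by (rule inner_vb)
  also have "\<dots> = poly (LP t U') (t m) - coeff (LP t U') 0" using phi_poly[of "LP t U'" D "t m"] dg c0 by simp
  finally show "coords e D (\<lambda>i. coeff (LP t U') i) \<bullet> vb m = poly (LP t U') (t m) - coeff (LP t U') 0" .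
qed

lemma v_single: "v ` ({\<alpha>} \<times> U) = (if \<alpha> then vb ` U else va ` U)"
proof -
  have "{\<alpha>} \<times> U = (\<lambda>m. (\<alpha>, m)) ` U" by auto
  then have "v ` ({\<alpha>} \<times> U) = (\<lambda>m. v (\<alpha>, m)) ` U" by (simp add: image_image)
  then show ?thesis by (cases \<alpha>) (simp_all add: v_def)
qed

lemma LB1:
  assumes U: "U \<subseteq> {1..n+1}" and cU: "card U = k+2"
  shows "aff_dim (v ` ({\<alpha>}\<times>U)) = int k + 1"
proof -
  have c1: "card U \<le> D+1" "card U \<le> D" using cU D by simp_all
  have "aff_dim (va ` U) = int k + 1" using LB_a[OF U c1(1)] cU by simp
  moreover have "aff_dim (vb ` U) = int k + 1" using LB_b[OF U c1(2)] cU by simp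
  ultimately show ?thesis by (simp add: v_single)
qed

lemma LB2:
  assumes U: "U \<subseteq> {1..n+1}" and cU: "card U = k+1" and i0: "i0 \<in> U"
  shows "aff_dim (insert (v (True,i0)) (v ` ({False}\<times>U))) = int k + 1"
proof -
  have finU: "finite U" using U finite_subset by blast
  have base: "aff_dim (va ` U) = int k" using LB_a[OF U] cU D by simp
  define p where "p = LP t U * monom 1 (D - (k+1))"
  have LPU: "degree (LP t U) = k+1" "lead_coeff (LP t U) = 1" using LP_props[OF finU, of t] cU by auto
  then have nz: "LP t U \<noteq> 0" by auto
  have dm: "degree (monom (1::real) (D - (k+1))) = D - (k+1)" by (simp add: degree_monom_eq)
  have "degree p = degree (LP t U) + degree (monom (1::real) (D - (k+1)))"
    unfolding p_def by (rule degree_mult_eq) (use nz in auto)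
  then have dp: "degree p = D" using dm LPU(1) D by simp
  have "lead_coeff p = 1" unfolding p_def lead_coeff_mult using LPU dm by simp
  then have lp: "coeff p D = 1" using dp by simp
  let ?a = "coords e D (\<lambda>i. coeff p i)"
  let ?b = "- coeff p 0"
  have "\<forall>y\<in>va ` U. ?a \<bullet> y = ?b"
  proof
    fix y assume "y \<in> va ` U"
    then obtain r where r: "r \<in> U" "y = va r" by blast
    have "poly (LP t U) (t r) = 0" using poly_LP_zero[OF finU] r(1) by auto
    then have "poly p (t r) = 0" by (simp add: p_def)
    then show "?a \<bullet> y = ?b" using r(2) dp by (simp add: inner_va phi_poly)
  qed
  moreover have "?a \<bullet> vb i0 \<noteq> ?b"
  proof -
    have "poly (LP t U) (t i0) = 0" using poly_LP_zero[OF finU] i0 by auto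
    then have "poly p (t i0) = 0" by (simp add: p_def)
    moreover have "mu i0 > 0" using mu_pos i0 U by auto
    ultimately show ?thesis using dp lp by (simp add: inner_vb phi_poly)
  qed
  ultimately have "aff_dim (insert (vb i0) (va ` U)) = aff_dim (va ` U) + 1"
    by (rule aff_dim_insert_sep)
  moreover have "v (True,i0) = vb i0" by (simp add: v_def)
  moreover have "v ` ({False}\<times>U) = va ` U" by (simp add: v_single)
  ultimately show ?thesis using base by simp
qed

lemma vdiff: "vb m - va m = mu m *\<^sub>R coords e D (\<lambda>j. if j = D then 1 else 0)"
  by (simp add: vec_eq_iff va_def vb_def coords_def mu_def)

lemma UB2: "T \<subseteq> {1..n+1} \<Longrightarrow> T \<noteq> {} \<Longrightarrow> aff_dim (v`(UNIV\<times>T)) \<le> int (card T)"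
proof -
  assume T: "T \<subseteq> {1..n+1}" "T \<noteq> {}"
  then obtain i0 where i0: "i0 \<in> T" by blast
  have finT: "finite T" using T finite_subset by blast
  have eq: "v`(UNIV\<times>T) = va`T \<union> vb`T" by (force simp: v_def)
  have "aff_dim (va`T \<union> vb`T) \<le> int (card T)"
  proof (rule prism_ub[OF finT i0])
    fix i assume "i \<in> T"
    have "mu i0 > 0" using mu_pos i0 T by auto
    then show "vb i - va i = (mu i / mu i0) *\<^sub>R (vb i0 - va i0)"
      by (simp add: vdiff)
  qed
  then show ?thesis using eq by simp
qed


lemma realize_gen:
  assumes T: "T \<subseteq> {1..n+1}"
    and va_eq: "\<And>m. m \<in> {1..n+1} \<Longrightarrow> a \<bullet> va m = b - X m"
    and vb_eq: "\<And>m. m \<in> {1..n+1} \<Longrightarrow> a \<bullet> vb m = b - Y m"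
    and Xp: "\<And>m. m \<in> {1..n+1} \<Longrightarrow> X m \<ge> 0" and Yp: "\<And>m. m \<in> {1..n+1} \<Longrightarrow> Y m \<ge> 0"
    and X0: "\<And>m. m \<in> {1..n+1} \<Longrightarrow> X m = 0 \<longleftrightarrow> False \<in> A \<and> m \<in> T"
    and Y0: "\<And>m. m \<in> {1..n+1} \<Longrightarrow> Y m = 0 \<longleftrightarrow> True \<in> A \<and> m \<in> T"
  shows "\<exists>a b. (\<forall>x\<in>UNIV\<times>{1..n+1}. a \<bullet> v x \<le> b) \<and> A \<times> T = {x\<in>UNIV\<times>{1..n+1}. a \<bullet> v x = b}"
proof (intro exI conjI)
  have key: "a \<bullet> v (\<alpha>, m) \<le> b \<and> (a \<bullet> v (\<alpha>, m) = b \<longleftrightarrow> \<alpha> \<in> A \<and> m \<in> T)"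
    if m: "m \<in> {1..n+1}" for \<alpha> m
  proof (cases \<alpha>)
    case True
    then show ?thesis using vb_eq[OF m] Yp[OF m] Y0[OF m] by (simp add: v_def)
  next
    case False
    then show ?thesis using va_eq[OF m] Xp[OF m] X0[OF m] by (simp add: v_def)
  qed
  show "\<forall>x\<in>UNIV\<times>{1..n+1}. a \<bullet> v x \<le> b" using key by auto
  show "A \<times> T = {x\<in>UNIV\<times>{1..n+1}. a \<bullet> v x = b}"
  proof (rule set_eqI)
    fix x :: "bool \<times> nat"
    obtain \<alpha> m where x: "x = (\<alpha>, m)" by (cases x)
    show "x \<in> A \<times> T \<longleftrightarrow> x \<in> {x\<in>UNIV\<times>{1..n+1}. a \<bullet> v x = b}"
    proof (cases "m \<in> {1..n+1}")
      case True then show ?thesis using key[OF True, of \<alpha>] x by auto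
    next
      case False then show ?thesis using T x by auto
    qed
  qed
qed

definition MT :: "nat set \<Rightarrow> real poly" where
  "MT T = LP t T * [:-(t 1 - 1), 1:] ^ (k + 1 - card T)"

lemma MT_props:
  assumes T: "T \<subseteq> {1..n+1}" and cT: "card T \<le> k+1"
  shows "degree (MT T) = k+1" "lead_coeff (MT T) = 1"
    "\<And>m. m \<in> {1..n+1} \<Longrightarrow> poly (MT T) (t m) = 0 \<longleftrightarrow> m \<in> T"
proof -
  have finT: "finite T" using T finite_subset by blast
  have L: "degree (LP t T) = card T" "lead_coeff (LP t T) = 1"
    using LP_props[OF finT, of t] by auto
  have dq: "degree ([:-(t 1 - 1), 1:] ^ (k + 1 - card T)) = k + 1 - card T"
    by (rule degree_linear_power)
  have lq: "lead_coeff ([:-(t 1 - 1), 1:] ^ (k + 1 - card T)) = 1"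
    unfolding lead_coeff_power by simp
  have nz1: "LP t T \<noteq> 0" using L(2) by auto
  have nz2: "[:-(t 1 - 1), 1:] ^ (k + 1 - card T) \<noteq> 0" using lq by auto
  have "degree (MT T) = degree (LP t T) + degree ([:-(t 1 - 1), 1:] ^ (k + 1 - card T))"
    unfolding MT_def by (rule degree_mult_eq[OF nz1 nz2])
  then show "degree (MT T) = k+1" using L(1) dq cT by simp
  have "lead_coeff (MT T) = lead_coeff (LP t T) * lead_coeff ([:-(t 1 - 1), 1:] ^ (k + 1 - card T))"
    unfolding MT_def by (rule lead_coeff_mult)
  then show "lead_coeff (MT T) = 1" using L(2) lq by simp
  fix m assume m: "m \<in> {1..n+1}"
  have "t m - (t 1 - 1) > 0" using t_ge[OF m] by simp
  then have pq: "poly ([:-(t 1 - 1), 1:] ^ (k + 1 - card T)) (t m) \<noteq> 0"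
    by (simp add: poly_power)
  have "poly (MT T) (t m) = poly (LP t T) (t m) * poly ([:-(t 1 - 1), 1:] ^ (k + 1 - card T)) (t m)"
    unfolding MT_def by (rule poly_mult)
  then have "poly (MT T) (t m) = 0 \<longleftrightarrow> poly (LP t T) (t m) = 0" using pq by (metis mult_eq_0_iff)
  also have "\<dots> \<longleftrightarrow> m \<in> T" by (rule sep_LP[OF finT T m])
  finally show "poly (MT T) (t m) = 0 \<longleftrightarrow> m \<in> T" .
qed

lemma RT_props:
  assumes T: "T \<subseteq> {1..n+1}" and cT: "card T \<le> k+1"
  shows "degree (MT T * MT T) = D" "coeff (MT T * MT T) D = 1"
    "\<And>x. poly (MT T * MT T) x = (poly (MT T) x)\<^sup>2"
proof -
  note M = MT_props[OF T cT]
  have nz: "MT T \<noteq> 0" using M(2) by auto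
  have "degree (MT T * MT T) = degree (MT T) + degree (MT T)" by (rule degree_mult_eq[OF nz nz])
  then show dR: "degree (MT T * MT T) = D" using M(1) D by simp
  have "lead_coeff (MT T * MT T) = lead_coeff (MT T) * lead_coeff (MT T)" by (rule lead_coeff_mult)
  then have "lead_coeff (MT T * MT T) = 1" using M(2) by simp
  then show "coeff (MT T * MT T) D = 1" using dR by simp
  show "\<And>x. poly (MT T * MT T) x = (poly (MT T) x)\<^sup>2" by (simp add: power2_eq_square)
qed

lemma realize:
  assumes S: "S \<in> Phi k n"
  shows "\<exists>a b. (\<forall>x\<in>UNIV\<times>{1..n+1}. a \<bullet> v x \<le> b) \<and> S = {x\<in>UNIV\<times>{1..n+1}. a \<bullet> v x = b}"
proof -
  consider "S = {}" | A T where "S = A \<times> T" "A \<noteq> {}" "T \<subseteq> {1..n+1}" "T \<noteq> {}" "card A + card T \<le> k+2"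
    using S unfolding Phi_def by blast
  then show ?thesis
  proof cases
    case 1
    show ?thesis
    proof (intro exI conjI)
      show "\<forall>x\<in>UNIV\<times>{1..n+1}. (0::real^'d) \<bullet> v x \<le> 1" by simp
      show "S = {x\<in>UNIV\<times>{1..n+1}. (0::real^'d) \<bullet> v x = 1}" using 1 by simp
    qed
  next
    case 2
    note S2 = 2
    have finT: "finite T" using S2(3) finite_subset by blast
    from \<open>A \<noteq> {}\<close> show ?thesis
    proof (cases rule: bool_set_cases)
      case 1
      have cT: "card T \<le> k" using S2(5) 1 by simp
      define p where "p = LP t T * LP t T"
      have L: "degree (LP t T) = card T" "lead_coeff (LP t T) = 1"
        using LP_props[OF finT, of t] by auto
      have nz: "LP t T \<noteq> 0" using L(2) by auto
      have "degree p = degree (LP t T) + degree (LP t T)" unfolding p_def by (rule degree_mult_eq[OF nz nz])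
      then have dp: "degree p < D" using L(1) cT D by simp
      then have dp': "degree p \<le> D" by simp
      have cD: "coeff p D = 0" using dp by (rule coeff_eq_0)
      let ?a = "coords e D (\<lambda>j. - coeff p j)"
      have "\<exists>a b. (\<forall>x\<in>UNIV\<times>{1..n+1}. a \<bullet> v x \<le> b) \<and> A \<times> T = {x\<in>UNIV\<times>{1..n+1}. a \<bullet> v x = b}"
      proof (rule realize_gen[OF S2(3), where a = ?a and b = "coeff p 0"
            and X = "\<lambda>m. poly p (t m)" and Y = "\<lambda>m. poly p (t m)"])
        fix m assume m: "m \<in> {1..n+1}"
        show "?a \<bullet> va m = coeff p 0 - poly p (t m)" by (simp add: inner_va phi_neg_poly[OF dp'])
        show "?a \<bullet> vb m = coeff p 0 - poly p (t m)" using cD by (simp add: inner_vb phi_neg_poly[OF dp'])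
        show "poly p (t m) \<ge> 0" "poly p (t m) \<ge> 0" by (simp_all add: p_def)
        have "poly p (t m) = 0 \<longleftrightarrow> m \<in> T" using sep_LP[OF finT S2(3) m] by (simp add: p_def)
        then show "poly p (t m) = 0 \<longleftrightarrow> False \<in> A \<and> m \<in> T" "poly p (t m) = 0 \<longleftrightarrow> True \<in> A \<and> m \<in> T"
          using 1 by simp_all
      qed
      then show ?thesis using S2(1) by simp
    next
      case (2 \<alpha>)
      have cT: "card T \<le> k+1" using S2(5) 2 by simp
      define R where "R = MT T * MT T"
      note RP = RT_props[OF S2(3) cT, folded R_def]
      note MP = MT_props[OF S2(3) cT]
      have Rnn: "poly R x \<ge> 0" for x using RP(3) by simp
      have R0: "m \<in> {1..n+1} \<Longrightarrow> poly R (t m) = 0 \<longleftrightarrow> m \<in> T" for m using RP(3) MP(3) by simp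
      show ?thesis
      proof (cases \<alpha>)
        case False
        let ?a = "coords e D (\<lambda>j. - coeff R j)"
        have dR: "degree R \<le> D" using RP(1) by simp
        have "\<exists>a b. (\<forall>x\<in>UNIV\<times>{1..n+1}. a \<bullet> v x \<le> b) \<and> A \<times> T = {x\<in>UNIV\<times>{1..n+1}. a \<bullet> v x = b}"
        proof (rule realize_gen[OF S2(3), where a = ?a and b = "coeff R 0"
              and X = "\<lambda>m. poly R (t m)" and Y = "\<lambda>m. poly R (t m) + mu m"])
          fix m assume m: "m \<in> {1..n+1}"
          show "?a \<bullet> va m = coeff R 0 - poly R (t m)" by (simp add: inner_va phi_neg_poly[OF dR])
          show "?a \<bullet> vb m = coeff R 0 - (poly R (t m) + mu m)" using RP(2) by (simp add: inner_vb phi_neg_poly[OF dR])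
          have mp: "mu m > 0" by (rule mu_pos[OF m])
          show "poly R (t m) \<ge> 0" by (rule Rnn)
          show "poly R (t m) + mu m \<ge> 0" using Rnn[of "t m"] mp by simp
          show "poly R (t m) = 0 \<longleftrightarrow> False \<in> A \<and> m \<in> T" using R0[OF m] 2 False by simp
          show "poly R (t m) + mu m = 0 \<longleftrightarrow> True \<in> A \<and> m \<in> T" using Rnn[of "t m"] mp 2 False by simp
        qed
        then show ?thesis using S2(1) by simp
      next
        case True
        define R' where "R' = R - monom 2 D"
        have dR': "degree R' \<le> D" unfolding R'_def
          by (rule degree_diff_le) (use RP(1) in \<open>simp_all add: degree_monom_le\<close>)
        have cR'D: "coeff R' D = -1" using RP(2) by (simp add: R'_def)
        have cR'0: "coeff R' 0 = coeff R 0" using D by (simp add: R'_def)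
        have pR': "poly R' x = poly R x - 2 * x ^ D" for x by (simp add: R'_def poly_monom)
        let ?a = "coords e D (\<lambda>j. - coeff R' j)"
        have "\<exists>a b. (\<forall>x\<in>UNIV\<times>{1..n+1}. a \<bullet> v x \<le> b) \<and> A \<times> T = {x\<in>UNIV\<times>{1..n+1}. a \<bullet> v x = b}"
        proof (rule realize_gen[OF S2(3), where a = ?a and b = "coeff R 0 + lam"
              and X = "\<lambda>m. poly R (t m) + mu m" and Y = "\<lambda>m. poly R (t m)"])
          fix m assume m: "m \<in> {1..n+1}"
          show "?a \<bullet> va m = coeff R 0 + lam - (poly R (t m) + mu m)"
            by (simp add: inner_va phi_neg_poly[OF dR'] cR'0 pR' mu_def)
          show "?a \<bullet> vb m = coeff R 0 + lam - poly R (t m)"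
            using cR'D by (simp add: inner_vb phi_neg_poly[OF dR'] cR'0 pR' mu_def)
          have mp: "mu m > 0" by (rule mu_pos[OF m])
          show "poly R (t m) \<ge> 0" by (rule Rnn)
          show "poly R (t m) + mu m \<ge> 0" using Rnn[of "t m"] mp by simp
          show "poly R (t m) = 0 \<longleftrightarrow> True \<in> A \<and> m \<in> T" using R0[OF m] 2 True by simp
          show "poly R (t m) + mu m = 0 \<longleftrightarrow> False \<in> A \<and> m \<in> T" using Rnn[of "t m"] mp 2 True by simp
        qed
        then show ?thesis using S2(1) by simp
      qed
    qed
  qed
qed


lemma Ccond:
  assumes le: "\<forall>x\<in>UNIV\<times>{1..n+1}. a \<bullet> v x \<le> b"
    and dim: "aff_dim (v ` {x\<in>UNIV\<times>{1..n+1}. a \<bullet> v x = b}) \<le> int k"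
  shows "{x\<in>UNIV\<times>{1..n+1}. a \<bullet> v x = b} \<in> Phi k n"
proof -
  define S where "S = {x\<in>UNIV\<times>{1..n+1}. a \<bullet> v x = b}"
  define c where "c = (\<lambda>j. a $ e j)"
  have ac: "a = coords e D c" unfolding c_def by (rule coords_all)
  have iva: "a \<bullet> va m = phi D c (t m)" for m unfolding ac by (rule inner_va)
  have ivb: "a \<bullet> vb m = phi D c (t m) + c D * mu m" for m unfolding ac by (rule inner_vb)
  have leA: "a \<bullet> va m \<le> b" if "m \<in> {1..n+1}" for m
    using bspec[OF le, of "(False, m)"] that by (simp add: v_def)
  have leB: "a \<bullet> vb m \<le> b" if "m \<in> {1..n+1}" for m
    using bspec[OF le, of "(True, m)"] that by (simp add: v_def)
  have memF: "(False, m) \<in> S \<longleftrightarrow> m \<in> {1..n+1} \<and> a \<bullet> va m = b" for m by (simp add: S_def v_def)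
  have memT: "(True, m) \<in> S \<longleftrightarrow> m \<in> {1..n+1} \<and> a \<bullet> vb m = b" for m by (simp add: S_def v_def)
  define T where "T = {m\<in>{1..n+1}. (False,m) \<in> S \<or> (True,m) \<in> S}"
  have Tsub: "T \<subseteq> {1..n+1}" by (auto simp: T_def)
  have "\<exists>A. A \<noteq> {} \<and> S = A \<times> T"
  proof (cases "c D > 0")
    case True
    have nF: "(False, m) \<notin> S" for m
    proof
      assume "(False, m) \<in> S"
      then have m: "m \<in> {1..n+1}" "a \<bullet> va m = b" using memF by auto
      have "a \<bullet> vb m > a \<bullet> va m" using iva ivb mu_pos[OF m(1)] True by simp
      then show False using leB[OF m(1)] m(2) by simp
    qed
    have "S = {True} \<times> T"
    proof (rule set_eqI)
      fix x :: "bool \<times> nat"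
      obtain \<alpha> m where x: "x = (\<alpha>, m)" by (cases x)
      show "x \<in> S \<longleftrightarrow> x \<in> {True} \<times> T"
        using nF[of m] memT[of m] x by (cases \<alpha>) (auto simp: T_def)
    qed
    then show ?thesis by blast
  next
    case False
    show ?thesis
    proof (cases "c D < 0")
      case True
      have nT: "(True, m) \<notin> S" for m
      proof
        assume "(True, m) \<in> S"
        then have m: "m \<in> {1..n+1}" "a \<bullet> vb m = b" using memT by auto
        have "a \<bullet> vb m < a \<bullet> va m" using iva ivb mu_pos[OF m(1)] True
          by (simp add: mult_neg_pos)
        then show False using leA[OF m(1)] m(2) by simp
      qed
      have "S = {False} \<times> T"
      proof (rule set_eqI)
        fix x :: "bool \<times> nat"
        obtain \<alpha> m where x: "x = (\<alpha>, m)" by (cases x)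
        show "x \<in> S \<longleftrightarrow> x \<in> {False} \<times> T"
          using nT[of m] memF[of m] x by (cases \<alpha>) (auto simp: T_def)
      qed
      then show ?thesis by blast
    next
      case False2: False
      then have c0: "c D = 0" using False by simp
      have same: "a \<bullet> vb m = a \<bullet> va m" for m using iva ivb c0 by simp
      have "S = UNIV \<times> T"
      proof (rule set_eqI)
        fix x :: "bool \<times> nat"
        obtain \<alpha> m where x: "x = (\<alpha>, m)" by (cases x)
        show "x \<in> S \<longleftrightarrow> x \<in> UNIV \<times> T"
          using memT[of m] memF[of m] same[of m] x by (cases \<alpha>) (auto simp: T_def)
      qed
      then show ?thesis by blast
    qed
  qed
  then obtain A where A: "A \<noteq> {}" "S = A \<times> T" by blast
  have "A \<times> T \<in> Phi k n"
    by (rule C_generic[OF LB1 LB2 A(1) Tsub]) (use dim A(2) S_def in simp_all)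
  then show ?thesis using A(2) S_def by simp
qed

lemma P_char:
  "skeleton (int k) (convex hull (v ` (UNIV\<times>{1..n+1}))) = (\<lambda>S. convex hull (v`S)) ` Phi k n"
  "\<forall>S\<in>Phi k n. \<forall>S'\<in>Phi k n. convex hull (v`S) \<subseteq> convex hull (v`S') \<longleftrightarrow> S \<subseteq> S'"
proof -
  have fin: "finite (UNIV\<times>{1..n+1} :: (bool \<times> nat) set)" by simp
  note sc = skeleton_char[OF fin refl, where \<Phi> = "Phi k n" and k = "int k", OF realize Ccond U_generic[OF UB2]]
  show "skeleton (int k) (convex hull (v ` (UNIV\<times>{1..n+1}))) = (\<lambda>S. convex hull (v`S)) ` Phi k n"
    by (rule sc(1))
  show "\<forall>S\<in>Phi k n. \<forall>S'\<in>Phi k n. convex hull (v`S) \<subseteq> convex hull (v`S') \<longleftrightarrow> S \<subseteq> S'"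
    by (rule sc(2))
qed

lemma P_dim: "aff_dim (convex hull (v ` (UNIV\<times>{1..n+1}))) = int D"
proof -
  have cardd: "CARD('d) = D" using bij_betw_same_card[OF bij] by simp
  have "aff_dim (convex hull (v ` (UNIV\<times>{1..n+1}))) \<le> int DIM(real^'d)" by (rule aff_dim_le_DIM)
  then have up: "aff_dim (convex hull (v ` (UNIV\<times>{1..n+1}))) \<le> int D" using cardd by simp
  have U: "{1..D+1} \<subseteq> {1..n+1}" using nk by auto
  have "aff_dim (va ` {1..D+1}) = int (card {1..D+1}) - 1" by (rule LB_a[OF U]) simp
  then have lo1: "aff_dim (va ` {1..D+1}) = int D" by simp
  have "va ` {1..D+1} \<subseteq> v ` (UNIV\<times>{1..n+1})" using U by (force simp: v_def)
  then have "aff_dim (va ` {1..D+1}) \<le> aff_dim (v ` (UNIV\<times>{1..n+1}))" by (rule aff_dim_subset)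
  then have lo: "int D \<le> aff_dim (convex hull (v ` (UNIV\<times>{1..n+1})))" using lo1 by (simp add: aff_dim_convex_hull)
  show ?thesis using up lo by simp
qed

lemma v_image: "v ` (UNIV\<times>{1..n+1}) = va ` {1..n+1} \<union> vb ` {1..n+1}"
  by (force simp: v_def)

end




lemma axis_nth_1: "(axis i (1::real) :: real^'n) $ j = (if j = i then 1 else 0)"
  by (simp add: axis_def)

lemma std_simplex_hull: "(std_simplex :: (real^'n) set) = convex hull (range (\<lambda>i. axis i 1))"
proof
  have cvx: "convex (std_simplex :: (real^'n) set)"
  proof (rule convexI)
    fix x y :: "real^'n" and u v :: real
    assume x: "x \<in> std_simplex" and y: "y \<in> std_simplex"
      and u: "0 \<le> u" and v: "0 \<le> v" and uv: "u + v = 1"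
    have x': "\<forall>i. 0 \<le> x $ i" "(\<Sum>i\<in>UNIV. x $ i) = 1" using x by (auto simp: std_simplex_def)
    have y': "\<forall>i. 0 \<le> y $ i" "(\<Sum>i\<in>UNIV. y $ i) = 1" using y by (auto simp: std_simplex_def)
    have "\<forall>i. 0 \<le> (u *\<^sub>R x + v *\<^sub>R y) $ i" using x' y' u v by simp
    moreover have "(\<Sum>i\<in>UNIV. (u *\<^sub>R x + v *\<^sub>R y) $ i) = u * (\<Sum>i\<in>UNIV. x $ i) + v * (\<Sum>i\<in>UNIV. y $ i)"
      by (simp add: sum.distrib sum_distrib_left)
    ultimately show "u *\<^sub>R x + v *\<^sub>R y \<in> std_simplex"
      using x' y' uv by (simp add: std_simplex_def)
  qed
  have "range (\<lambda>i. axis i (1::real)) \<subseteq> (std_simplex :: (real^'n) set)"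
  proof
    fix z assume "z \<in> range (\<lambda>i. axis i (1::real) :: real^'n)"
    then obtain i where z: "z = axis i 1" by blast
    have "(\<Sum>j\<in>UNIV. (axis i (1::real) :: real^'n) $ j) = 1"
      by (simp add: axis_nth_1)
    then show "z \<in> std_simplex" unfolding std_simplex_def z by (simp add: axis_nth_1)
  qed
  then show "convex hull (range (\<lambda>i. axis i 1)) \<subseteq> (std_simplex :: (real^'n) set)"
    by (rule hull_minimal) (rule cvx)
  show "(std_simplex :: (real^'n) set) \<subseteq> convex hull (range (\<lambda>i. axis i 1))"
  proof
    fix x :: "real^'n" assume "x \<in> std_simplex"
    then have x: "\<forall>i. 0 \<le> x $ i" "(\<Sum>i\<in>UNIV. x $ i) = 1" by (auto simp: std_simplex_def)
    have "(\<Sum>i\<in>UNIV. x $ i *\<^sub>R (axis i 1 :: real^'n)) \<in> convex hull (range (\<lambda>i. axis i 1))"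
      by (rule convex_sum) (use x in \<open>auto intro: hull_inc\<close>)
    moreover have "(\<Sum>i\<in>UNIV. x $ i *\<^sub>R (axis i 1 :: real^'n)) = x"
      using basis_expansion[of x] by (simp add: scalar_mult_eq_scaleR)
    ultimately show "x \<in> convex hull (range (\<lambda>i. axis i 1))" by simp
  qed
qed

definition Ei :: "bool \<Rightarrow> 2" where "Ei \<alpha> = (if \<alpha> then 2 else 1)"

lemma one_neq_two_2: "(1::2) \<noteq> 2"
  by simp

lemma Ei_inj: "inj Ei"
  unfolding inj_def Ei_def using one_neq_two_2 by auto

lemma Ei_surj: "range Ei = UNIV"
  unfolding Ei_def using UNIV_2 by auto

locale Qside =
  fixes n k :: nat and idx :: "nat \<Rightarrow> 'm::finite"
  assumes bij: "bij_betw idx {1..n+1} (UNIV :: 'm set)"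
begin

definition w :: "bool \<times> nat \<Rightarrow> (real^2) \<times> (real^'m)" where
  "w x = (axis (Ei (fst x)) 1, axis (idx (snd x)) 1)"

lemma inner_w: "(u, z) \<bullet> w x = u $ Ei (fst x) + z $ idx (snd x)"
  by (simp add: w_def inner_axis)

lemma idx_inj: "inj_on idx {1..n+1}" using bij by (simp add: bij_betw_def)

lemma Q_hull: "(std_simplex :: (real^2) set) \<times> (std_simplex :: (real^'m) set) = convex hull (w ` (UNIV \<times> {1..n+1}))"
proof -
  have e1: "w ` (UNIV \<times> {1..n+1}) = (\<lambda>\<alpha>. axis (Ei \<alpha>) (1::real)) ` UNIV \<times> (\<lambda>m. axis (idx m) (1::real)) ` {1..n+1}"
  proof -
    have wm: "w = map_prod (\<lambda>\<alpha>. axis (Ei \<alpha>) (1::real)) (\<lambda>m. axis (idx m) (1::real))"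
      by (simp add: fun_eq_iff w_def map_prod_def split_beta)
    show ?thesis unfolding wm by (rule map_prod_surj_on[OF refl refl])
  qed
  have e2: "(\<lambda>\<alpha>. axis (Ei \<alpha>) (1::real)) ` UNIV = range (\<lambda>i::2. axis i 1)"
  proof -
    have "(\<lambda>i::2. axis i (1::real)) ` (range Ei) = (\<lambda>\<alpha>. axis (Ei \<alpha>) 1) ` UNIV" by (rule image_image)
    then show ?thesis unfolding Ei_surj by simp
  qed
  have iu: "idx ` {1..n+1} = UNIV" using bij by (simp add: bij_betw_def)
  have e3: "(\<lambda>m. axis (idx m) (1::real)) ` {1..n+1} = range (\<lambda>i::'m. axis i 1)"
  proof -
    have "(\<lambda>i::'m. axis i (1::real)) ` (idx ` {1..n+1}) = (\<lambda>m. axis (idx m) 1) ` {1..n+1}" by (rule image_image)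
    then show ?thesis unfolding iu by simp
  qed
  show ?thesis unfolding e1 e2 e3 convex_hull_Times std_simplex_hull ..
qed

lemma realizeQ:
  assumes S: "S \<in> Phi k n"
  shows "\<exists>a b. (\<forall>x\<in>UNIV\<times>{1..n+1}. a \<bullet> w x \<le> b) \<and> S = {x\<in>UNIV\<times>{1..n+1}. a \<bullet> w x = b}"
proof -
  consider "S = {}" | A T where "S = A \<times> T" "A \<noteq> {}" "T \<subseteq> {1..n+1}" "T \<noteq> {}" "card A + card T \<le> k+2"
    using S unfolding Phi_def by blast
  then show ?thesis
  proof cases
    case 1
    show ?thesis
    proof (intro exI conjI)
      show "\<forall>x\<in>UNIV\<times>{1..n+1}. (0::(real^2) \<times> (real^'m)) \<bullet> w x \<le> 1" by simp
      show "S = {x\<in>UNIV\<times>{1..n+1}. (0::(real^2) \<times> (real^'m)) \<bullet> w x = 1}" using 1 by simp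
    qed
  next
    case 2
    define u :: "real^2" where "u = (\<chi> i. if i \<in> Ei ` A then 0 else -1)"
    define z :: "real^'m" where "z = (\<chi> i. if i \<in> idx ` T then 0 else -1)"
    have val: "(u, z) \<bullet> w (\<alpha>, m) = (if \<alpha> \<in> A then 0 else -1) + (if idx m \<in> idx ` T then 0 else -1)" for \<alpha> m
      by (simp add: inner_w u_def z_def inj_image_mem_iff[OF Ei_inj])
    have memT: "m \<in> {1..n+1} \<Longrightarrow> idx m \<in> idx ` T \<longleftrightarrow> m \<in> T" for m
      by (rule inj_on_image_mem_iff[OF idx_inj _ 2(3)])
    show ?thesis
    proof (intro exI conjI)
      show "\<forall>x\<in>UNIV\<times>{1..n+1}. (u, z) \<bullet> w x \<le> 0"
      proof
        fix x :: "bool \<times> nat" assume "x \<in> UNIV\<times>{1..n+1}"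
        obtain \<alpha> m where x: "x = (\<alpha>, m)" by (cases x)
        show "(u, z) \<bullet> w x \<le> 0" unfolding x val by simp
      qed
      show "S = {x\<in>UNIV\<times>{1..n+1}. (u, z) \<bullet> w x = 0}"
      proof (rule set_eqI)
        fix x :: "bool \<times> nat"
        obtain \<alpha> m where x: "x = (\<alpha>, m)" by (cases x)
        show "x \<in> S \<longleftrightarrow> x \<in> {x\<in>UNIV\<times>{1..n+1}. (u, z) \<bullet> w x = 0}"
        proof (cases "m \<in> {1..n+1}")
          case True
          then show ?thesis using memT[OF True] 2(1) x by (simp add: val)
        next
          case False
          then show ?thesis using x 2(1,3) by auto
        qed
      qed
    qed
  qed
qed

lemma LB_w:
  assumes U: "U \<subseteq> {1..n+1}"
  shows "aff_dim ((\<lambda>m. w (\<alpha>, m)) ` U) = int (card U) - 1"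
proof (rule indep_induct)
  show finU: "finite U" using U finite_subset by blast
  fix U' j assume U': "U' \<subseteq> U" "j \<in> U - U'"
  let ?a = "(0::real^2, axis (idx j) (1::real) :: real^'m)"
  have j1: "j \<in> {1..n+1}" using U'(2) U by blast
  have "\<forall>i\<in>U'. ?a \<bullet> w (\<alpha>, i) = 0"
  proof
    fix i assume i: "i \<in> U'"
    then have "i \<in> {1..n+1}" "i \<noteq> j" using U' U by auto
    then have "idx i \<noteq> idx j" using inj_onD[OF idx_inj] j1 by blast
    then show "?a \<bullet> w (\<alpha>, i) = 0" by (simp add: w_def inner_axis_axis)
  qed
  moreover have "?a \<bullet> w (\<alpha>, j) \<noteq> 0" by (simp add: w_def inner_axis_axis)
  ultimately show "\<exists>a b. (\<forall>i\<in>U'. a \<bullet> w (\<alpha>, i) = b) \<and> a \<bullet> w (\<alpha>, j) \<noteq> b"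
    by (intro exI[of _ ?a] exI[of _ 0] conjI)
qed

lemma w_single: "w ` ({\<alpha>} \<times> U) = (\<lambda>m. w (\<alpha>, m)) ` U"
proof -
  have "{\<alpha>} \<times> U = (\<lambda>m. (\<alpha>, m)) ` U" by auto
  then show ?thesis by (simp add: image_image)
qed

lemma LB1Q:
  assumes U: "U \<subseteq> {1..n+1}" and cU: "card U = k+2"
  shows "aff_dim (w ` ({\<alpha>}\<times>U)) = int k + 1"
  using LB_w[OF U, of \<alpha>] cU by (simp add: w_single)

lemma LB2Q:
  assumes U: "U \<subseteq> {1..n+1}" and cU: "card U = k+1" and i0: "i0 \<in> U"
  shows "aff_dim (insert (w (True,i0)) (w ` ({False}\<times>U))) = int k + 1"
proof -
  have base: "aff_dim (w ` ({False}\<times>U)) = int k" using LB_w[OF U, of False] cU by (simp add: w_single)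
  let ?a = "(axis (2::2) (1::real), 0::real^'m)"
  have "\<forall>y\<in>w ` ({False}\<times>U). ?a \<bullet> y = 0"
    using one_neq_two_2 by (auto simp: w_def Ei_def inner_axis_axis)
  moreover have "?a \<bullet> w (True, i0) \<noteq> 0" by (simp add: w_def Ei_def inner_axis_axis)
  ultimately have "aff_dim (insert (w (True,i0)) (w ` ({False}\<times>U))) = aff_dim (w ` ({False}\<times>U)) + 1"
    by (rule aff_dim_insert_sep)
  then show ?thesis using base by simp
qed

lemma UB2Q:
  assumes T: "T \<subseteq> {1..n+1}" "T \<noteq> {}"
  shows "aff_dim (w`(UNIV\<times>T)) \<le> int (card T)"
proof -
  obtain i0 where i0: "i0 \<in> T" using T by blast
  have finT: "finite T" using T finite_subset by blast
  have eq: "w`(UNIV\<times>T) = (\<lambda>m. w (False, m))`T \<union> (\<lambda>m. w (True, m))`T"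
    by (auto simp: image_iff) (metis (full_types))
  have "aff_dim ((\<lambda>m. w (False, m))`T \<union> (\<lambda>m. w (True, m))`T) \<le> int (card T)"
  proof (rule prism_ub[OF finT i0])
    fix i assume "i \<in> T"
    show "w (True, i) - w (False, i) = 1 *\<^sub>R (w (True, i0) - w (False, i0))"
      by (simp add: w_def)
  qed
  then show ?thesis using eq by simp
qed

lemma rect:
  fixes a :: "(real^2) \<times> (real^'m)"
  assumes le: "\<forall>x\<in>UNIV\<times>{1..n+1}. a \<bullet> w x \<le> b"
  shows "\<exists>A T. A \<noteq> {} \<and> T \<subseteq> {1..n+1} \<and> {x\<in>UNIV\<times>{1..n+1}. a \<bullet> w x = b} = A \<times> T"
proof -
  define S where "S = {x\<in>UNIV\<times>{1..n+1}. a \<bullet> w x = b}"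
  obtain u z where a: "a = (u, z)" by (cases a)
  define G where "G = (\<lambda>\<alpha>. u $ Ei \<alpha>)"
  define H where "H = (\<lambda>m. z $ idx m)"
  have val: "a \<bullet> w (\<alpha>, m) = G \<alpha> + H m" for \<alpha> m by (simp add: a inner_w G_def H_def)
  have le': "G \<alpha> + H m \<le> b" if "m \<in> {1..n+1}" for \<alpha> m
    using bspec[OF le, of "(\<alpha>, m)"] that val by simp
  have mem: "(\<alpha>, m) \<in> S \<longleftrightarrow> m \<in> {1..n+1} \<and> G \<alpha> + H m = b" for \<alpha> m
    by (simp add: S_def val)
  show ?thesis
  proof (cases "S = {}")
    case True
    then show ?thesis unfolding S_def[symmetric] by (intro exI[of _ UNIV] exI[of _ "{}"]) simp
  next
    case False
    then obtain \<alpha>0 m0 where s0: "(\<alpha>0, m0) \<in> S" by auto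
    then have m0: "m0 \<in> {1..n+1}" "G \<alpha>0 + H m0 = b" using mem by auto
    define A where "A = {\<alpha>. (\<alpha>, m0) \<in> S}"
    define T where "T = {m. (\<alpha>0, m) \<in> S}"
    have "S = A \<times> T"
    proof (rule set_eqI)
      fix x :: "bool \<times> nat"
      obtain \<alpha> m where x: "x = (\<alpha>, m)" by (cases x)
      show "x \<in> S \<longleftrightarrow> x \<in> A \<times> T"
      proof
        assume "x \<in> S"
        then have m: "m \<in> {1..n+1}" "G \<alpha> + H m = b" using mem x by auto
        have "G \<alpha> + H m0 \<le> b" by (rule le'[OF m0(1)])
        moreover have "G \<alpha>0 + H m \<le> b" by (rule le'[OF m(1)])
        ultimately have "G \<alpha> + H m0 = b" "G \<alpha>0 + H m = b" using m(2) m0(2) by linarith+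
        then show "x \<in> A \<times> T" using x m(1) m0(1) by (simp add: A_def T_def mem)
      next
        assume "x \<in> A \<times> T"
        then have "m0 \<in> {1..n+1}" "G \<alpha> + H m0 = b" "m \<in> {1..n+1}" "G \<alpha>0 + H m = b"
          using x by (auto simp: A_def T_def mem)
        then have "G \<alpha> + H m = b" using m0(2) by linarith
        then show "x \<in> S" using x \<open>m \<in> {1..n+1}\<close> by (simp add: mem)
      qed
    qed
    moreover have "A \<noteq> {}" using s0 by (auto simp: A_def)
    moreover have "T \<subseteq> {1..n+1}" by (auto simp: T_def mem)
    ultimately show ?thesis unfolding S_def[symmetric] by blast
  qed
qed

lemma CcondQ:
  assumes le: "\<forall>x\<in>UNIV\<times>{1..n+1}. a \<bullet> w x \<le> b"
    and dim: "aff_dim (w ` {x\<in>UNIV\<times>{1..n+1}. a \<bullet> w x = b}) \<le> int k"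
  shows "{x\<in>UNIV\<times>{1..n+1}. a \<bullet> w x = b} \<in> Phi k n"
proof -
  obtain A T where AT: "A \<noteq> {}" "T \<subseteq> {1..n+1}" "{x\<in>UNIV\<times>{1..n+1}. a \<bullet> w x = b} = A \<times> T"
    using rect[OF le] by blast
  have "A \<times> T \<in> Phi k n"
    by (rule C_generic[OF LB1Q LB2Q AT(1) AT(2)]) (use dim AT(3) in simp_all)
  then show ?thesis using AT(3) by simp
qed

lemma Q_char:
  "skeleton (int k) (convex hull (w ` (UNIV\<times>{1..n+1}))) = (\<lambda>S. convex hull (w`S)) ` Phi k n"
  "\<forall>S\<in>Phi k n. \<forall>S'\<in>Phi k n. convex hull (w`S) \<subseteq> convex hull (w`S') \<longleftrightarrow> S \<subseteq> S'"
proof -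
  have fin: "finite (UNIV\<times>{1..n+1} :: (bool \<times> nat) set)" by simp
  note sc = skeleton_char[OF fin refl, where \<Phi> = "Phi k n" and k = "int k", OF realizeQ CcondQ U_generic[OF UB2Q]]
  show "skeleton (int k) (convex hull (w ` (UNIV\<times>{1..n+1}))) = (\<lambda>S. convex hull (w`S)) ` Phi k n"
    by (rule sc(1))
  show "\<forall>S\<in>Phi k n. \<forall>S'\<in>Phi k n. convex hull (w`S) \<subseteq> convex hull (w`S') \<longleftrightarrow> S \<subseteq> S'"
    by (rule sc(2))
qed

end




theorem proposition2p3:
  fixes k n :: nat
    and t :: "nat \<Rightarrow> real"
    and e :: "nat \<Rightarrow> 'd::finite"
  assumes "n \<ge> 2 * k + 2"
    and "\<And>i j. 1 \<le> i \<Longrightarrow> i < j \<Longrightarrow> j \<le> n + 1 \<Longrightarrow> t i < t j"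
    and "CARD('d) = 2 * k + 2"
    and "bij_betw e {1..2 * k + 2} (UNIV :: 'd set)"
    and "CARD('m::finite) = n + 1"
  shows "\<exists>lam0::real. \<forall>lam\<ge>lam0.
    (let P = convex hull
          ((\<lambda>i. coords e (2 * k + 2) (\<lambda>j. t i ^ j)) ` {1..n + 1} \<union>
           (\<lambda>i. coords e (2 * k + 2)
                 (\<lambda>j. if j = 2 * k + 2 then lam - t i ^ (2 * k + 2) else t i ^ j)) ` {1..n + 1})
     in polytope P \<and> aff_dim P = int (2 * k + 2) \<and>
        skel_equiv (int k) P ((std_simplex :: (real^2) set) \<times> (std_simplex :: (real^'m) set)))"
proof -
  obtain idx :: "nat \<Rightarrow> 'm" where idx: "bij_betw idx {1..n+1} UNIV"
    using ex_bij_betw_nat_finite_1[of "UNIV :: 'm set"] assms(5) by auto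
  interpret Q: Qside n k idx by (rule Qside.intro[OF idx])
  define lam0 where "lam0 = 2 * (\<Sum>m\<in>{1..n+1}. t m ^ (2*k+2)) + 1"
  show ?thesis
  proof (rule exI[of _ lam0], intro allI impI)
    fix lam :: real assume lam: "lam \<ge> lam0"
    have ev: "even (2*k+2)" by simp
    have lamb: "2 * t m ^ (2*k+2) < lam" if "m \<in> {1..n+1}" for m
    proof -
      have "t m ^ (2*k+2) \<le> (\<Sum>m\<in>{1..n+1}. t m ^ (2*k+2))"
        by (rule member_le_sum) (use that zero_le_even_power[OF ev] in auto)
      then show ?thesis using lam unfolding lam0_def by linarith
    qed
    interpret P: Pside k n "2*k+2" t e lam
      by (rule Pside.intro[OF refl assms(1) assms(2) assms(4) lamb])
    have vaeq: "P.va = (\<lambda>i. coords e (2 * k + 2) (\<lambda>j. t i ^ j))"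
      by (rule ext, rule P.va_def)
    have vbeq: "P.vb = (\<lambda>i. coords e (2 * k + 2)
                 (\<lambda>j. if j = 2 * k + 2 then lam - t i ^ (2 * k + 2) else t i ^ j))"
      by (rule ext, rule P.vb_def)
    have Pe: "convex hull
          ((\<lambda>i. coords e (2 * k + 2) (\<lambda>j. t i ^ j)) ` {1..n + 1} \<union>
           (\<lambda>i. coords e (2 * k + 2)
                 (\<lambda>j. if j = 2 * k + 2 then lam - t i ^ (2 * k + 2) else t i ^ j)) ` {1..n + 1})
         = convex hull (P.v ` (UNIV \<times> {1..n+1}))"
      unfolding P.v_image vaeq vbeq ..
    have poly: "polytope (convex hull (P.v ` (UNIV \<times> {1..n+1})))"
      by (rule polytope_convex_hull) simp
    have dim: "aff_dim (convex hull (P.v ` (UNIV \<times> {1..n+1}))) = int (2*k+2)"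
      by (rule P.P_dim)
    have se: "skel_equiv (int k) (convex hull (P.v ` (UNIV \<times> {1..n+1})))
               ((std_simplex :: (real^2) set) \<times> (std_simplex :: (real^'m) set))"
      unfolding Q.Q_hull by (rule skel_equiv_from_char[OF P.P_char Q.Q_char])
    show "let P = convex hull
          ((\<lambda>i. coords e (2 * k + 2) (\<lambda>j. t i ^ j)) ` {1..n + 1} \<union>
           (\<lambda>i. coords e (2 * k + 2)
                 (\<lambda>j. if j = 2 * k + 2 then lam - t i ^ (2 * k + 2) else t i ^ j)) ` {1..n + 1})
     in polytope P \<and> aff_dim P = int (2 * k + 2) \<and>
        skel_equiv (int k) P ((std_simplex :: (real^2) set) \<times> (std_simplex :: (real^'m) set))"
      unfolding Let_def Pe using poly dim se by blast
  qed
qed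


end
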